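(* Let $R$ be a finite commutative local Frobenius ring with residue field $\mathbb{F}_q$. For $i=1,2$, let $C_i$ be a non-free linear code of length $n$ over $R$, and suppose $C_1+C_2=R^n$. Then $C_1\cap C_2\neq\{\mathbf{0}\}$; that is, $\{C_1,C_2\}$ is an $\ell$-DLIP for some $\ell\neq 0$.
   Context: A linear code of length $n$ over $R$ is an $R$-submodule of $R^n$; it is free if it is a free $R$-module. $\dim(C):=\log_q|C|$, and a pair $\{C,D\}$ is an $\ell$-DLIP if $\dim(C\cap D)=\ell$. *)

theory Defs
  imports "HOL-Analysis.Analysis"
begin

definition ring_ideal :: "'a::comm_ring_1 set \<Rightarrow> bool" where
  "ring_ideal I \<longleftrightarrow> module.subspace ((*) :: 'a \<Rightarrow> 'a \<Rightarrow> 'a) I"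

definition maximal_ideal :: "'a::comm_ring_1 set \<Rightarrow> bool" where
  "maximal_ideal M \<longleftrightarrow> ring_ideal M \<and> M \<noteq> UNIV \<and>
     (\<forall>J. ring_ideal J \<and> M \<subseteq> J \<longrightarrow> J = M \<or> J = UNIV)"

definition minimal_ideal :: "'a::comm_ring_1 set \<Rightarrow> bool" where
  "minimal_ideal I \<longleftrightarrow> ring_ideal I \<and> I \<noteq> {0} \<and>
     (\<forall>J. ring_ideal J \<and> J \<subseteq> I \<longrightarrow> J = {0} \<or> J = I)"

definition local_ring :: "'a::comm_ring_1 itself \<Rightarrow> bool" where
  "local_ring _ \<longleftrightarrow> (\<exists>!M::'a set. maximal_ideal M)"

definition socle :: "'a::comm_ring_1 itself \<Rightarrow> 'a set" where
  "socle _ = module.span ((*) :: 'a \<Rightarrow> 'a \<Rightarrow> 'a) (\<Union>{I::'a set. minimal_ideal I})"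

text \<open>A finite commutative ring is Frobenius iff its socle is a principal ideal.\<close>
definition frobenius_ring :: "'a::comm_ring_1 itself \<Rightarrow> bool" where
  "frobenius_ring T \<longleftrightarrow> (\<exists>a::'a. socle T = {r * a | r. r \<in> UNIV})"

definition vscale :: "'a::comm_ring_1 \<Rightarrow> 'a ^ 'n \<Rightarrow> 'a ^ 'n" where
  "vscale r x = (\<chi> i. r * x $ i)"

definition linear_code :: "('a::comm_ring_1 ^ 'n) set \<Rightarrow> bool" where
  "linear_code C \<longleftrightarrow> module.subspace (vscale :: 'a \<Rightarrow> 'a ^ 'n \<Rightarrow> 'a ^ 'n) C"

definition free_code :: "('a::comm_ring_1 ^ 'n) set \<Rightarrow> bool" where
  "free_code C \<longleftrightarrow> (\<exists>B \<subseteq> C. \<not> module.dependent (vscale :: 'a \<Rightarrow> 'a ^ 'n \<Rightarrow> 'a ^ 'n) B \<and>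
                             module.span (vscale :: 'a \<Rightarrow> 'a ^ 'n \<Rightarrow> 'a ^ 'n) B = C)"

end

theory Submission
  imports Defs
begin

lemma module_vscale: "module (vscale :: 'a::comm_ring_1 \<Rightarrow> 'a ^ 'n \<Rightarrow> 'a ^ 'n)"
  by unfold_locales (simp_all add: vscale_def vec_eq_iff algebra_simps)

lemma module_mult: "module ((*) :: 'a::comm_ring_1 \<Rightarrow> 'a \<Rightarrow> 'a)"
  by unfold_locales (simp_all add: algebra_simps)

interpretation V: module "vscale :: 'a::comm_ring_1 \<Rightarrow> 'a ^ 'n \<Rightarrow> 'a ^ 'n"
  by (rule module_vscale)


lemma vscale_nth[simp]: "vscale r x $ i = r * x $ i"
  by (simp add: vscale_def)

lemma ring_ideal_iff: "ring_ideal I \<longleftrightarrow> 0 \<in> I \<and> (\<forall>x\<in>I. \<forall>y\<in>I. x + y \<in> I) \<and> (\<forall>c. \<forall>x\<in>I. c * x \<in> I)"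
  unfolding ring_ideal_def module.subspace_def[OF module_mult] by simp

lemma ex_maximal_above:
  fixes I :: "'a::{comm_ring_1,finite} set"
  assumes "ring_ideal I" "I \<noteq> UNIV"
  shows "\<exists>M. maximal_ideal M \<and> I \<subseteq> M"
proof -
  define S where "S = {J. ring_ideal J \<and> I \<subseteq> J \<and> J \<noteq> UNIV}"
  have fin: "finite S" by simp
  have "I \<in> S" using assms by (simp add: S_def)
  then have ne: "S \<noteq> {}" by blast
  from finite_has_maximal[OF fin ne]
  obtain J where J: "J \<in> S" "\<forall>K\<in>S. J \<le> K \<longrightarrow> J = K" by (elim bexE)
  have "maximal_ideal J" unfolding maximal_ideal_def
  proof (intro conjI allI impI)
    show "ring_ideal J" "J \<noteq> UNIV" using J(1) by (auto simp: S_def)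
    fix K assume K: "ring_ideal K \<and> J \<subseteq> K"
    show "K = J \<or> K = UNIV"
    proof (cases "K = UNIV")
      case False
      then have "K \<in> S" using K J(1) by (auto simp: S_def)
      then show ?thesis using J(2) K by auto
    qed simp
  qed
  moreover have "I \<subseteq> J" using J(1) by (simp add: S_def)
  ultimately show ?thesis by blast
qed

lemma nonunit_add:
  assumes loc: "local_ring TYPE('a::{comm_ring_1,finite})"
    and x: "\<not> ((x::'a) dvd 1)" and y: "\<not> (y dvd 1)"
  shows "\<not> ((x + y) dvd 1)"
proof
  assume u: "((x + y) dvd 1)"
  have pid: "ring_ideal {r * z | r. True}" "{r * z | r. True} \<noteq> UNIV" if "\<not> (z dvd 1)" for z :: 'a
  proof -
    show "ring_ideal {r * z | r. True}" unfolding ring_ideal_iff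
    proof (intro conjI ballI allI)
      show "0 \<in> {r * z | r. True}" by (rule CollectI, rule exI[of _ 0]) simp
      fix a b assume "a \<in> {r * z | r. True}" "b \<in> {r * z | r. True}"
      then obtain ra rb where "a = ra * z" "b = rb * z" by blast
      then have "a + b = (ra + rb) * z" by (simp add: distrib_right)
      then show "a + b \<in> {r * z | r. True}" by blast
    next
      fix c a assume "a \<in> {r * z | r. True}"
      then obtain ra where "a = ra * z" by blast
      then have "c * a = (c * ra) * z" by (simp only: mult.assoc)
      then show "c * a \<in> {r * z | r. True}" by blast
    qed
    show "{r * z | r. True} \<noteq> UNIV"
    proof
      assume "{r * z | r. True} = UNIV"
      then have "1 \<in> {r * z | r. True}" by simp
      then obtain r where "1 = r * z" by blast
      then have "z dvd 1" by (metis dvd_triv_right)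
      then show False using that by blast
    qed
  qed
  obtain M1 where M1: "maximal_ideal M1" "{r * x | r. True} \<subseteq> M1"
    using ex_maximal_above[OF pid[OF x]] by blast
  obtain M2 where M2: "maximal_ideal M2" "{r * y | r. True} \<subseteq> M2"
    using ex_maximal_above[OF pid[OF y]] by blast
  have "M1 = M2"
  proof -
    from loc obtain M :: "'a set" where "\<forall>N. maximal_ideal N \<longrightarrow> N = M" unfolding local_ring_def by blast
    then show ?thesis using M1(1) M2(1) by blast
  qed
  have id: "ring_ideal M1" "M1 \<noteq> UNIV" using M1(1) unfolding maximal_ideal_def by auto
  have self: "z \<in> {r * z | r. True}" for z :: 'a by (rule CollectI, rule exI[of _ 1]) simp
  have "x \<in> M1" using M1(2) self[of x] by (rule subsetD)
  moreover have "y \<in> M1" using M2(2) self[of y] \<open>M1 = M2\<close> by blast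
  ultimately have xy: "x + y \<in> M1" using id(1) unfolding ring_ideal_iff by blast
  obtain w where w: "1 = (x + y) * w" using u by (rule dvdE)
  have "w * (x + y) \<in> M1" using xy id(1) unfolding ring_ideal_iff by blast
  then have "1 \<in> M1" using w by (simp add: mult.commute)
  then have "r * 1 \<in> M1" for r using id(1) unfolding ring_ideal_iff by blast
  then have "M1 = UNIV" by auto
  then show False using id(2) by blast
qed

lemma one_minus_nonunit:
  assumes loc: "local_ring TYPE('a::{comm_ring_1,finite})"
    and m: "\<not> ((m::'a) dvd 1)"
  shows "((1 - m) dvd 1)"
proof (rule ccontr)
  assume "\<not> ((1 - m) dvd 1)"
  from nonunit_add[OF loc this m] show False by simp
qed

lemma vec_expand:
  fixes x :: "'a::comm_ring_1 ^ 'n"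
  shows "x = (\<Sum>i\<in>UNIV. vscale (x $ i) (axis i 1))"
proof -
  have c: "(\<Sum>i\<in>UNIV. vscale (x $ i) (axis i 1)) $ j = x $ j" for j
  proof -
    have "(\<Sum>i\<in>UNIV. vscale (x $ i) (axis i 1)) $ j = (\<Sum>i\<in>UNIV. if j = i then x $ i else 0)"
      unfolding sum_component vscale_nth by (rule sum.cong) (simp_all add: axis_def)
    also have "\<dots> = x $ j" by simp
    finally show ?thesis .
  qed
  show ?thesis by (rule vec_eq_iff[THEN iffD2], rule allI, rule c[symmetric])
qed

lemma lam_sum:
  fixes coef :: "'n::finite \<Rightarrow> 'a::comm_ring_1 ^ 'n \<Rightarrow> 'a"
  shows "(\<Sum>i\<in>UNIV. (\<Sum>b\<in>B. vscale (v b) b) $ i * coef i c) = (\<Sum>b\<in>B. v b * (\<Sum>i\<in>UNIV. b $ i * coef i c))"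
proof -
  have "(\<Sum>i\<in>UNIV. (\<Sum>b\<in>B. vscale (v b) b) $ i * coef i c) = (\<Sum>i\<in>UNIV. \<Sum>b\<in>B. v b * (b $ i * coef i c))"
    by (simp add: sum_distrib_right mult.assoc)
  also have "\<dots> = (\<Sum>b\<in>B. \<Sum>i\<in>UNIV. v b * (b $ i * coef i c))"
    by (rule sum.swap)
  also have "\<dots> = (\<Sum>b\<in>B. v b * (\<Sum>i\<in>UNIV. b $ i * coef i c))"
    by (simp add: sum_distrib_left)
  finally show ?thesis .
qed

theorem theorem3p16:
  fixes C1 C2 :: "('a::{comm_ring_1, finite} ^ 'n) set"
  assumes "local_ring TYPE('a)"
    and "frobenius_ring TYPE('a)"
    and "linear_code C1" and "\<not> free_code C1"
    and "linear_code C2" and "\<not> free_code C2"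
    and "{x + y | x y. x \<in> C1 \<and> y \<in> C2} = UNIV"
  shows "C1 \<inter> C2 \<noteq> {0}"
proof
  assume int0: "C1 \<inter> C2 = {0}"
  note loc = assms(1)
  have sub1: "V.subspace C1" using assms(3) unfolding linear_code_def .
  have sub2: "V.subspace C2" using assms(5) unfolding linear_code_def .
  have "C1 \<subseteq> C1 \<and> V.span C1 = C1" using sub1 by simp
  then obtain B where B: "B \<subseteq> C1 \<and> V.span B = C1"
    and Bmin: "\<forall>B'. B' \<subseteq> C1 \<and> V.span B' = C1 \<longrightarrow> card B \<le> card B'"
    using ex_has_least_nat[of "\<lambda>B. B \<subseteq> C1 \<and> V.span B = C1" C1 card] by blast
  have finB: "finite B" by simp
  have relnu: "\<not> (u b0 dvd 1)" if rel: "(\<Sum>b\<in>B. vscale (u b) b) = 0" and b0: "b0 \<in> B" for u b0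
  proof
    assume "u b0 dvd 1"
    then obtain w where w: "1 = u b0 * w" by (rule dvdE)
    have "(\<Sum>b\<in>B. vscale (u b) b) = vscale (u b0) b0 + (\<Sum>b\<in>B-{b0}. vscale (u b) b)"
      using b0 finB by (simp add: sum.remove)
    hence e: "vscale (u b0) b0 = - (\<Sum>b\<in>B-{b0}. vscale (u b) b)" using rel
      by (simp add: eq_neg_iff_add_eq_0)
    have w1: "w * u b0 = 1" using w by (simp add: mult.commute)
    have "vscale w (vscale (u b0) b0) = vscale (w * u b0) b0" by (rule V.scale_scale)
    then have "b0 = vscale w (vscale (u b0) b0)" using w1 by simp
    also have "\<dots> = vscale w (- (\<Sum>b\<in>B-{b0}. vscale (u b) b))" by (simp only: e)
    finally have b0e: "b0 = vscale w (- (\<Sum>b\<in>B-{b0}. vscale (u b) b))" .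
    have "(\<Sum>b\<in>B-{b0}. vscale (u b) b) \<in> V.span (B - {b0})"
      by (intro V.span_sum V.span_scale V.span_base)
    then have "vscale w (- (\<Sum>b\<in>B-{b0}. vscale (u b) b)) \<in> V.span (B - {b0})"
      by (intro V.span_scale V.span_neg)
    then have b0s: "b0 \<in> V.span (B - {b0})" by (simp only: b0e[symmetric])
    have "B \<subseteq> V.span (B - {b0})"
    proof
      fix b assume b: "b \<in> B"
      show "b \<in> V.span (B - {b0})"
      proof (cases "b = b0")
        case True then show ?thesis using b0s by simp
      next
        case False then have "b \<in> B - {b0}" using b by simp
        then show ?thesis by (rule V.span_base)
      qed
    qed
    then have "V.span B \<subseteq> V.span (B-{b0})" by (simp add: V.span_minimal)
    moreover have "V.span (B-{b0}) \<subseteq> V.span B" by (rule V.span_mono) auto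
    ultimately have "V.span (B-{b0}) = C1" using B by auto
    moreover have "B - {b0} \<subseteq> C1" using B by auto
    ultimately have "card B \<le> card (B - {b0})" using Bmin by blast
    moreover have "card (B-{b0}) < card B" by (rule card_Diff1_less[OF finB b0])
    ultimately show False by simp
  qed
  have "\<exists>y z. y \<in> C1 \<and> z \<in> C2 \<and> axis i 1 = y + z" for i :: 'n
  proof -
    have "axis i (1::'a) \<in> {x + y | x y. x \<in> C1 \<and> y \<in> C2}" using assms(7) by simp
    then show ?thesis by blast
  qed
  then obtain Y Z where YZ: "\<And>i. Y i \<in> C1 \<and> Z i \<in> C2 \<and> axis i 1 = Y i + Z i" by metis
  have "\<exists>u. Y i = (\<Sum>b\<in>B. vscale (u b) b)" for i
  proof -
    have "Y i \<in> V.span B" using YZ B by auto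
    then show ?thesis using V.span_finite[OF finB] by auto
  qed
  then obtain coef where coef: "\<And>i. Y i = (\<Sum>b\<in>B. vscale (coef i b) b)" by metis
  define lam where "lam c x = (\<Sum>i\<in>UNIV. x $ i * coef i c)" for c x :: "'a ^ 'n"
  have key: "x = (\<Sum>b\<in>B. vscale (lam b x) b)" if x: "x \<in> C1" for x
  proof -
    define s1 where "s1 = (\<Sum>i\<in>UNIV. vscale (x $ i) (Y i))"
    define s2 where "s2 = (\<Sum>i\<in>UNIV. vscale (x $ i) (Z i))"
    have "x = (\<Sum>i\<in>UNIV. vscale (x $ i) (axis i 1))" by (rule vec_expand)
    also have "\<dots> = s1 + s2" unfolding s1_def s2_def using YZ
      by (simp add: vec_eq_iff sum.distrib[symmetric] distrib_left)
    finally have xs: "x = s1 + s2" .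
    have "s1 \<in> C1" unfolding s1_def using YZ
      by (intro V.subspace_sum[OF sub1] V.subspace_scale[OF sub1]) auto
    have "s2 \<in> C2" unfolding s2_def using YZ
      by (intro V.subspace_sum[OF sub2] V.subspace_scale[OF sub2]) auto
    moreover have "s2 \<in> C1" using V.subspace_diff[OF sub1 x \<open>s1 \<in> C1\<close>] xs by simp
    ultimately have "s2 = 0" using int0 by blast
    then have "x = s1" using xs by simp
    also have "\<dots> = (\<Sum>b\<in>B. vscale (lam b x) b)"
    proof -
      have "s1 $ j = (\<Sum>b\<in>B. vscale (lam b x) b) $ j" for j
      proof -
        have "s1 $ j = (\<Sum>i\<in>UNIV. \<Sum>b\<in>B. x $ i * (coef i b * b $ j))"
          unfolding s1_def by (simp add: coef sum_distrib_left)
        also have "\<dots> = (\<Sum>b\<in>B. \<Sum>i\<in>UNIV. x $ i * (coef i b * b $ j))"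
          by (rule sum.swap)
        also have "\<dots> = (\<Sum>b\<in>B. vscale (lam b x) b) $ j"
          by (simp add: lam_def sum_distrib_right mult.assoc)
        finally show ?thesis .
      qed
      then show ?thesis by (simp add: vec_eq_iff)
    qed
    finally show ?thesis .
  qed
  have lamlin: "lam c (\<Sum>b\<in>B. vscale (v b) b) = (\<Sum>b\<in>B. v b * lam c b)" for c v
    unfolding lam_def by (rule lam_sum)
  have diag: "\<not> ((lam c b - (if c = b then 1 else 0)) dvd 1)" if c: "c \<in> B" and b: "b \<in> B" for c b
  proof -
    have bC: "b \<in> C1" using b B by auto
    have dsum: "(\<Sum>c\<in>B. vscale (if c = b then 1 else 0) c) = b"
    proof -
      have "(\<Sum>c\<in>B. vscale (if c = b then 1 else 0) c) = (\<Sum>c\<in>B. if c = b then b else 0)"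
        by (rule sum.cong) simp_all
      also have "\<dots> = b" using b finB by (simp add: sum.delta')
      finally show ?thesis .
    qed
    have "(\<Sum>c\<in>B. vscale (lam c b - (if c = b then 1 else 0)) c)
        = (\<Sum>c\<in>B. vscale (lam c b) c) - (\<Sum>c\<in>B. vscale (if c = b then 1 else 0) c)"
      by (simp add: vec_eq_iff sum_subtractf left_diff_distrib)
    also have "\<dots> = 0" using key[OF bC] dsum by simp
    finally have "(\<Sum>c'\<in>B. vscale (lam c' b - (if c' = b then 1 else 0)) c') = 0" .
    from relnu[of "\<lambda>c'. lam c' b - (if c' = b then 1 else 0)" c, OF this c] show ?thesis by simp
  qed
  have "V.independent B"
  proof
    assume "V.dependent B"
    then obtain t u v0 where t: "finite t" "t \<subseteq> B" "(\<Sum>v\<in>t. vscale (u v) v) = 0"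
      and v0: "v0 \<in> t" "u v0 \<noteq> 0"
      unfolding V.dependent_explicit by blast
    define u' where "u' b = (if b \<in> t then u b else 0)" for b
    have "(\<Sum>b\<in>B. vscale (u' b) b) = (\<Sum>b\<in>B. if b \<in> t then vscale (u b) b else 0)"
      by (rule sum.cong) (auto simp: u'_def vec_eq_iff)
    also have "\<dots> = (\<Sum>b\<in>B \<inter> t. vscale (u b) b)" using finB by (simp add: sum.inter_restrict)
    also have "B \<inter> t = t" using t by auto
    finally have rel0: "(\<Sum>b\<in>B. vscale (u' b) b) = 0" using t by simp
    define T where "T = {(\<lambda>b. r * u' b) | r. True}"
    define Rs where "Rs w = range (\<lambda>s. (\<lambda>b::'a^'n. s * w b))" for w :: "'a^'n \<Rightarrow> 'a"
    have "u' \<in> T \<and> u' \<noteq> (\<lambda>_. 0)" unfolding T_def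
    proof
      show "u' \<in> {(\<lambda>b. r * u' b) | r. True}" by (rule CollectI, rule exI[of _ 1]) simp
      show "u' \<noteq> (\<lambda>_. 0)" using v0 by (auto simp: u'_def fun_eq_iff)
    qed
    then obtain w where w: "w \<in> T \<and> w \<noteq> (\<lambda>_. 0)"
      and wmin: "\<forall>w'. w' \<in> T \<and> w' \<noteq> (\<lambda>_. 0) \<longrightarrow> card (Rs w) \<le> card (Rs w')"
      using ex_has_least_nat[of "\<lambda>w. w \<in> T \<and> w \<noteq> (\<lambda>_. 0)" u' "\<lambda>w. card (Rs w)"] by blast
    obtain r where wr: "w = (\<lambda>b. r * u' b)" using w unfolding T_def by blast
    have ann: "m * w b = 0" if m: "\<not> (m dvd 1)" for m b
    proof (rule ccontr)
      assume nz: "m * w b \<noteq> 0"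
      define w' where "w' = (\<lambda>b. m * w b)"
      have w'T: "w' \<in> T \<and> w' \<noteq> (\<lambda>_. 0)"
      proof
        show "w' \<in> T" unfolding T_def w'_def wr
          by (rule CollectI, rule exI[of _ "m * r"]) (simp add: mult.assoc)
        show "w' \<noteq> (\<lambda>_. 0)" using nz by (auto simp: w'_def fun_eq_iff)
      qed
      have sub: "Rs w' \<subseteq> Rs w"
      proof
        fix f assume "f \<in> Rs w'"
        then obtain s where "f = (\<lambda>b. s * w' b)" unfolding Rs_def by blast
        then have "f = (\<lambda>b. (s * m) * w b)" by (simp add: w'_def mult.assoc)
        then show "f \<in> Rs w" unfolding Rs_def by blast
      qed
      have "w \<notin> Rs w'"
      proof
        assume "w \<in> Rs w'"
        then obtain s where ws: "w = (\<lambda>b. s * w' b)" unfolding Rs_def by blast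
        have "\<not> ((s * m) dvd 1)" using m dvd_mult_right by blast
        then have "(1 - s * m) dvd 1" by (rule one_minus_nonunit[OF loc])
        then obtain g where g: "1 = (1 - s * m) * g" by (rule dvdE)
        have "w b' = 0" for b'
        proof -
          have "w b' = s * m * w b'" using ws by (simp add: w'_def fun_eq_iff mult.assoc)
          then have "(1 - s * m) * w b' = 0" by (simp add: left_diff_distrib)
          then have "g * ((1 - s * m) * w b') = 0" by simp
          moreover have "w b' = ((1 - s * m) * g) * w b'" by (simp only: g[symmetric] mult_1_left)
          moreover have "((1 - s * m) * g) * w b' = g * ((1 - s * m) * w b')" by (simp only: ac_simps)
          ultimately show "w b' = 0" by simp
        qed
        then show False using w by (auto simp: fun_eq_iff)
      qed
      moreover have "w \<in> Rs w" unfolding Rs_def by (rule range_eqI[of _ _ 1]) simp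
      ultimately have "Rs w' \<subset> Rs w" using sub by blast
      then have "card (Rs w') < card (Rs w)" by (rule psubset_card_mono[rotated]) simp
      then show False using wmin w'T by fastforce
    qed
    have relw: "(\<Sum>b\<in>B. vscale (w b) b) = 0"
    proof -
      have "(\<Sum>b\<in>B. vscale (u' b) b) $ j = 0" for j using rel0 by simp
      then have "(\<Sum>b\<in>B. u' b * b $ j) = 0" for j by simp
      then have "(\<Sum>b\<in>B. vscale (w b) b) $ j = 0" for j
        by (simp add: wr mult.assoc sum_distrib_left[symmetric])
      then show ?thesis by (simp add: vec_eq_iff)
    qed
    have "w c = 0" if c: "c \<in> B" for c
    proof -
      have "0 = lam c 0" by (simp add: lam_def)
      also have "\<dots> = (\<Sum>b\<in>B. w b * lam c b)" using relw lamlin[of c w] by simp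
      also have "\<dots> = (\<Sum>b\<in>B. w b * (if c = b then 1 else 0))"
      proof (rule sum.cong)
        fix b assume b: "b \<in> B"
        have "(lam c b - (if c = b then 1 else 0)) * w b = 0" using ann diag[OF c b] by blast
        then show "w b * lam c b = w b * (if c = b then 1 else 0)"
          by (simp add: algebra_simps)
      qed simp
      also have "\<dots> = w c" using c finB by (simp add: if_distrib[of "\<lambda>r. _ * r"] cong: if_cong)
      finally show ?thesis by simp
    qed
    moreover have "w b = 0" if "b \<notin> B" for b using that t by (auto simp: wr u'_def)
    ultimately have "w = (\<lambda>_. 0)" by (auto simp: fun_eq_iff)
    then show False using w by simp
  qed
  then have "free_code C1" unfolding free_code_def using B by blast
  then show False using assms(4) by simp
qed

end
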